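(* Let $m,n\in\mathbb N$. Then for all Banach spaces $X,Y$ and all bounded linear operators $T:X\to Y$, $$\tau(T|\mathcal H(\mathbb D_{m+1}^{m+n}))=\tau(T|\mathcal H(\mathbb D_1^n)).$$
   Context: Dyadic intervals: $\Delta_k^{(j)}:=[\frac{j-1}{2^k},\frac{j}{2^k})$. Haar functions: for $k\ge1$, integer $j$, $\chi_k^{(j)}(t)=+2^{(k-1)/2}$ on $\Delta_k^{(2j-1)}$, $-2^{(k-1)/2}$ on $\Delta_k^{(2j)}$, $0$ otherwise, $t\in[0,1)$. $\mathbb D_m^n:=\{(k,j):k=m,\dots,n;\ j=1,\dots,2^{k-1}\}$. For a finite set $\mathbb F$ of such indices and bounded linear $T:X\to Y$, $\tau(T|\mathcal H(\mathbb F))$ is the least $c\ge0$ such that $\|\sum_{(k,j)\in\mathbb F}Tx_k^{(j)}\chi_k^{(j)}|L_2\|\le c(\sum_{(k,j)\in\mathbb F}\|x_k^{(j)}\|^2)^{1/2}$ for all $x_k^{(j)}\in X$, where $\|\cdot|L_2\|$ is the Bochner $L_2([0,1),Y)$ norm. *)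

theory Defs
  imports "HOL-Analysis.Analysis"
begin

definition dyadic :: "nat \<Rightarrow> int \<Rightarrow> real set" where
  "dyadic k j = {(real_of_int j - 1) / 2 ^ k ..< real_of_int j / 2 ^ k}"

definition haar :: "nat \<Rightarrow> int \<Rightarrow> real \<Rightarrow> real" where
  "haar k j t =
     (if t \<in> {0..<1} \<and> t \<in> dyadic k (2 * j - 1) then 2 powr ((real k - 1) / 2)
      else if t \<in> {0..<1} \<and> t \<in> dyadic k (2 * j) then - (2 powr ((real k - 1) / 2))
      else 0)"

definition dyadic_index :: "nat \<Rightarrow> nat \<Rightarrow> (nat \<times> int) set" where
  "dyadic_index m n = {(k, j). m \<le> k \<and> k \<le> n \<and> 1 \<le> j \<and> j \<le> 2 ^ (k - 1)}"

definition L2_norm :: "(real \<Rightarrow> 'b::real_normed_vector) \<Rightarrow> real" where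
  "L2_norm f = sqrt (LINT t : {0..<1} | lborel. (norm (f t))\<^sup>2)"

definition tau :: "('a::real_normed_vector \<Rightarrow> 'b::real_normed_vector) \<Rightarrow> (nat \<times> int) set \<Rightarrow> real" where
  "tau T F = Inf {c. 0 \<le> c \<and> (\<forall>x :: nat \<times> int \<Rightarrow> 'a.
      L2_norm (\<lambda>t. \<Sum>(k, j)\<in>F. haar k j t *\<^sub>R T (x (k, j)))
        \<le> c * sqrt (\<Sum>(k, j)\<in>F. (norm (x (k, j)))\<^sup>2))}"

end

theory Submission
  imports Defs
begin

lemma haar_meas[measurable]: "haar k j \<in> borel_measurable borel"
  unfolding haar_def dyadic_def by measurable

lemma haar_zero: "t \<notin> {0..<1} \<Longrightarrow> haar k j t = 0"
  unfolding haar_def by auto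

lemma haar_bound: "\<bar>haar k j t\<bar> \<le> 2 powr ((real k - 1) / 2)"
  unfolding haar_def by auto

lemma finite_dyadic_index: "finite (dyadic_index a b)"
proof (rule finite_subset)
  show "dyadic_index a b \<subseteq> {a..b} \<times> {1..2^b}"
  proof safe
    fix k j assume "(k,j) \<in> dyadic_index a b"
    then have h: "a \<le> k" "k \<le> b" "1 \<le> j" "j \<le> 2^(k-1)" unfolding dyadic_index_def by auto
    have "(2::int)^(k-1) \<le> 2^b" by (rule power_increasing) (use h in auto)
    with h show "k \<in> {a..b}" "j \<in> {1..2^b}" by (auto, linarith)
  qed
qed auto

lemma dyadic_sub: "1 \<le> i \<Longrightarrow> i \<le> 2^k \<Longrightarrow> dyadic k i \<subseteq> {0..<1}"
proof
  fix t assume a: "1 \<le> i" "i \<le> 2^k" "t \<in> dyadic k i"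
  have p: "(0::real) < 2^k" by simp
  have "real_of_int i \<le> 2^k" using a(2) by (metis of_int_le_iff of_int_numeral of_int_power)
  moreover have "real_of_int i \<ge> 1" using a(1) by simp
  moreover have "real_of_int i - 1 \<le> t * 2^k" "t * 2^k < real_of_int i"
    using a(3) p unfolding dyadic_def by (auto simp: divide_simps)
  ultimately have "0 \<le> t * 2^k" "t * 2^k < 1 * 2^k" by linarith+
  then show "t \<in> {0..<1}" using p
    by (auto simp: zero_le_mult_iff mult_less_cancel_right)
qed

lemma dyadic_left: "(t \<in> dyadic (k+1) i) = (2*t \<in> dyadic k i)"
proof -
  have p: "(0::real) < 2^k" by simp
  show ?thesis unfolding dyadic_def using p by (auto simp: divide_simps)
qed

lemma dyadic_right: "(t \<in> dyadic (k+1) (i + 2^k)) = (2*t - 1 \<in> dyadic k i)"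
proof -
  have p: "(0::real) < 2^k" by simp
  show ?thesis unfolding dyadic_def using p by (auto simp: divide_simps algebra_simps)
qed

lemma two_pow_pred: "1 \<le> k \<Longrightarrow> (2::int) * 2^(k-1) = 2^k"
  by (cases k) simp_all

lemma haar_simple:
  assumes "1 \<le> k" "1 \<le> j" "j \<le> 2^(k-1)"
  shows "haar k j t = (if t \<in> dyadic k (2*j-1) then 2 powr ((real k - 1) / 2)
     else if t \<in> dyadic k (2*j) then - (2 powr ((real k - 1) / 2)) else 0)"
proof -
  have "2*j \<le> 2^k" using assms two_pow_pred[OF assms(1)] by linarith
  then have s1: "dyadic k (2*j-1) \<subseteq> {0..<1}" 
    using assms by (intro dyadic_sub) linarith+
  from \<open>2*j \<le> 2^k\<close> have s2: "dyadic k (2*j) \<subseteq> {0..<1}"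
    using assms by (intro dyadic_sub) linarith+
  show ?thesis
  proof (cases "t \<in> dyadic k (2*j-1)")
    case True then show ?thesis using s1 unfolding haar_def by auto
  next
    case False then show ?thesis using s2 unfolding haar_def by auto
  qed
qed

lemma powr_c: "2 powr ((real (k+1) - 1) / 2) = sqrt 2 * 2 powr ((real k - 1) / 2)"
proof -
  have "2 powr ((real (k+1) - 1) / 2) = 2 powr (1/2 + (real k - 1) / 2)" by (simp add: field_simps)
  also have "\<dots> = sqrt 2 * 2 powr ((real k - 1) / 2)" by (simp add: powr_add powr_half_sqrt)
  finally show ?thesis .
qed

lemma haar_left:
  assumes "1 \<le> k" "1 \<le> j" "j \<le> 2^(k-1)"
  shows "haar (k+1) j t = sqrt 2 * haar k j (2*t)"
proof -
  have "j \<le> 2^(k+1-1)" using assms two_pow_pred[OF assms(1)] by simp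
  then have "haar (k+1) j t = (if t \<in> dyadic (k+1) (2*j-1) then 2 powr ((real (k+1) - 1) / 2)
     else if t \<in> dyadic (k+1) (2*j) then - (2 powr ((real (k+1) - 1) / 2)) else 0)"
    using assms by (intro haar_simple) auto
  then show ?thesis unfolding haar_simple[OF assms] dyadic_left powr_c by simp
qed

lemma haar_right:
  assumes "1 \<le> k" "1 \<le> j" "j \<le> 2^(k-1)"
  shows "haar (k+1) (j + 2^(k-1)) t = sqrt 2 * haar k j (2*t - 1)"
proof -
  have e: "2*(j + 2^(k-1)) - 1 = (2*j-1) + 2^k" "2*(j + 2^(k-1)) = 2*j + 2^k"
    using two_pow_pred[OF assms(1)] by (simp_all add: algebra_simps)
  have "j + 2^(k-1) \<le> 2^(k+1-1)" using assms two_pow_pred[OF assms(1)] by simp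
  then have "haar (k+1) (j + 2^(k-1)) t = (if t \<in> dyadic (k+1) (2*(j + 2^(k-1))-1) then 2 powr ((real (k+1) - 1) / 2)
     else if t \<in> dyadic (k+1) (2*(j + 2^(k-1))) then - (2 powr ((real (k+1) - 1) / 2)) else 0)"
    using assms by (intro haar_simple) auto
  moreover have "(t \<in> dyadic (k+1) (2*(j + 2^(k-1))-1)) = (2*t - 1 \<in> dyadic k (2*j-1))"
    by (subst e(1), rule dyadic_right)
  moreover have "(t \<in> dyadic (k+1) (2*(j + 2^(k-1)))) = (2*t - 1 \<in> dyadic k (2*j))"
    by (subst e(2), rule dyadic_right)
  ultimately show ?thesis unfolding haar_simple[OF assms] powr_c by simp
qed

definition Gs :: "('a \<Rightarrow> 'b::real_normed_vector) \<Rightarrow> (nat \<times> int) set \<Rightarrow> (nat \<times> int \<Rightarrow> 'a) \<Rightarrow> real \<Rightarrow> 'b" where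
  "Gs T F x = (\<lambda>t. \<Sum>(k, j)\<in>F. haar k j t *\<^sub>R T (x (k, j)))"

definition Ns :: "(nat \<times> int) set \<Rightarrow> (nat \<times> int \<Rightarrow> 'a::real_normed_vector) \<Rightarrow> real" where
  "Ns F x = (\<Sum>(k, j)\<in>F. (norm (x (k, j)))\<^sup>2)"

definition Lf :: "nat \<times> int \<Rightarrow> nat \<times> int" where "Lf p = (fst p + 1, snd p)"
definition Rf :: "nat \<times> int \<Rightarrow> nat \<times> int" where "Rf p = (fst p + 1, snd p + 2^(fst p - 1))"

lemma idx_split:
  assumes "1 \<le> a"
  shows "dyadic_index (a+1) (b+1) = Lf ` dyadic_index a b \<union> Rf ` dyadic_index a b"
proof (rule set_eqI, rule iffI)
  fix p assume p: "p \<in> dyadic_index (a+1) (b+1)"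
  obtain k j where kj: "p = (k,j)" by fastforce
  show "p \<in> Lf ` dyadic_index a b \<union> Rf ` dyadic_index a b"
  proof (rule ccontr)
  assume "p \<notin> Lf ` dyadic_index a b \<union> Rf ` dyadic_index a b"
  then have nL: "(k,j) \<notin> Lf ` dyadic_index a b" and "(k,j) \<notin> Rf ` dyadic_index a b" using kj by auto
  with p kj have h: "a+1 \<le> k" "k \<le> b+1" "1 \<le> j" "j \<le> 2^(k-1)" and nr: "(k,j) \<notin> Rf ` dyadic_index a b"
    unfolding dyadic_index_def by auto
  define k0 where "k0 = k - 1"
  have k: "k = k0 + 1" "1 \<le> k0" using h assms unfolding k0_def by auto
  have tp: "(2::int)^(k-1) = 2 * 2^(k0-1)" using two_pow_pred[OF k(2)] k by simp
  show False
  proof (cases "j \<le> 2^(k0-1)")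
    case True
    then have "(k0, j) \<in> dyadic_index a b" using h k unfolding dyadic_index_def by auto
    moreover have "(k,j) = Lf (k0,j)" using k unfolding Lf_def by simp
    ultimately show ?thesis using nL by blast
  next
    case False
    then have "(k0, j - 2^(k0-1)) \<in> dyadic_index a b" using h k tp unfolding dyadic_index_def by auto
    moreover have "(k,j) = Rf (k0, j - 2^(k0-1))" using k unfolding Rf_def by simp
    ultimately show ?thesis using nr by blast
  qed
  qed
next
  fix p assume "p \<in> Lf ` dyadic_index a b \<union> Rf ` dyadic_index a b"
  then obtain k j where kj: "(k,j) \<in> dyadic_index a b" "p = Lf (k,j) \<or> p = Rf (k,j)" by auto
  then have h: "a \<le> k" "k \<le> b" "1 \<le> j" "j \<le> 2^(k-1)" unfolding dyadic_index_def by auto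
  have tp: "(2::int)^(k+1-1) = 2 * 2^(k-1)" using two_pow_pred[of k] h assms by simp
  have "Lf (k,j) \<in> dyadic_index (a+1) (b+1)" using h tp unfolding Lf_def dyadic_index_def by auto
  moreover have "Rf (k,j) \<in> dyadic_index (a+1) (b+1)" using h tp unfolding Rf_def dyadic_index_def by auto
  ultimately show "p \<in> dyadic_index (a+1) (b+1)" using kj by auto
qed

lemma idx_disj: "Lf ` dyadic_index a b \<inter> Rf ` dyadic_index a b = {}"
proof (rule ccontr)
  assume "Lf ` dyadic_index a b \<inter> Rf ` dyadic_index a b \<noteq> {}"
  then obtain p q where pq: "p \<in> dyadic_index a b" "q \<in> dyadic_index a b" "Lf p = Rf q" by blast
  then have "fst p = fst q" "snd p = snd q + 2^(fst q - 1)" unfolding Lf_def Rf_def by auto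
  moreover have "snd p \<le> 2^(fst p - 1)" "1 \<le> snd q" using pq(1,2) unfolding dyadic_index_def by auto
  ultimately show False by simp
qed

lemma inj_Lf: "inj_on Lf A" unfolding Lf_def inj_on_def by auto
lemma inj_Rf: "inj_on Rf A" unfolding Rf_def inj_on_def by auto

lemma sum_split:
  assumes "1 \<le> a"
  shows "(\<Sum>p\<in>dyadic_index (a+1) (b+1). f p) = (\<Sum>p\<in>dyadic_index a b. f (Lf p)) + (\<Sum>p\<in>dyadic_index a b. f (Rf p))"
  unfolding idx_split[OF assms]
  by (subst sum.union_disjoint) (auto simp: finite_dyadic_index idx_disj sum.reindex inj_Lf inj_Rf)

lemma Ns_split:
  assumes "1 \<le> a"
  shows "Ns (dyadic_index (a+1) (b+1)) x = Ns (dyadic_index a b) (x \<circ> Lf) + Ns (dyadic_index a b) (x \<circ> Rf)"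
  unfolding Ns_def sum_split[OF assms] by (simp add: case_prod_unfold Lf_def Rf_def)

lemma Gs_split:
  assumes "1 \<le> a"
  shows "Gs T (dyadic_index (a+1) (b+1)) x t = sqrt 2 *\<^sub>R (Gs T (dyadic_index a b) (x \<circ> Lf) (2*t) + Gs T (dyadic_index a b) (x \<circ> Rf) (2*t - 1))"
proof -
  have L: "haar (fst (Lf p)) (snd (Lf p)) t = sqrt 2 * haar (fst p) (snd p) (2*t)" if "p \<in> dyadic_index a b" for p
  proof -
    obtain k j where p: "p = (k,j)" by fastforce
    show ?thesis using that assms haar_left[of k j t] unfolding p Lf_def dyadic_index_def by simp
  qed
  have R: "haar (fst (Rf p)) (snd (Rf p)) t = sqrt 2 * haar (fst p) (snd p) (2*t - 1)" if "p \<in> dyadic_index a b" for p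
  proof -
    obtain k j where p: "p = (k,j)" by fastforce
    show ?thesis using that assms haar_right[of k j t] unfolding p Rf_def dyadic_index_def by simp
  qed
  show ?thesis
    unfolding Gs_def case_prod_unfold sum_split[OF assms] scaleR_add_right scaleR_sum_right
    by (intro arg_cong2[where f="(+)"] sum.cong refl) (simp_all add: L R)
qed

lemma Gs_zero: "t \<notin> {0..<1} \<Longrightarrow> Gs T F x t = 0"
  unfolding Gs_def by (simp add: haar_zero)

lemma haar_meas_lborel[measurable]: "haar k j \<in> borel_measurable lborel"
  using haar_meas by simp

lemma haar_vals: "haar k j t = 2 powr ((real k - 1) / 2) \<or> haar k j t = - (2 powr ((real k - 1) / 2)) \<or> haar k j t = 0"
  unfolding haar_def by auto

lemma norm_sum_meas:
  assumes "finite F"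
  shows "(\<lambda>t. norm (w + (\<Sum>p\<in>F. haar (fst p) (snd p) t *\<^sub>R v p))) \<in> borel_measurable lborel"
  using assms
proof (induction F arbitrary: w rule: finite_induct)
  case empty
  then show ?case by simp
next
  case (insert q F)
  define c where "c = 2 powr ((real (fst q) - 1) / 2)"
  define S where "S = (\<lambda>t. \<Sum>p\<in>F. haar (fst p) (snd p) t *\<^sub>R v p)"
  have e: "norm (w + (\<Sum>p\<in>insert q F. haar (fst p) (snd p) t *\<^sub>R v p)) =
    (if haar (fst q) (snd q) t = c then norm ((w + c *\<^sub>R v q) + S t)
     else if haar (fst q) (snd q) t = - c then norm ((w - c *\<^sub>R v q) + S t)
     else norm (w + S t))" for t
  proof -
    have "(\<Sum>p\<in>insert q F. haar (fst p) (snd p) t *\<^sub>R v p) = haar (fst q) (snd q) t *\<^sub>R v q + S t"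
      unfolding S_def using insert.hyps by simp
    then show ?thesis using haar_vals[of "fst q" "snd q" t] unfolding c_def
      by (auto simp: algebra_simps)
  qed
  have m1: "(\<lambda>t. norm ((w + c *\<^sub>R v q) + S t)) \<in> borel_measurable lborel"
    using insert.IH unfolding S_def .
  have m2: "(\<lambda>t. norm ((w - c *\<^sub>R v q) + S t)) \<in> borel_measurable lborel"
    using insert.IH unfolding S_def .
  have m3: "(\<lambda>t. norm (w + S t)) \<in> borel_measurable lborel"
    using insert.IH unfolding S_def .
  have s1: "{t \<in> space lborel. haar (fst q) (snd q) t = c} \<in> sets lborel" by measurable
  have s2: "{t \<in> space lborel. haar (fst q) (snd q) t = - c} \<in> sets lborel" by measurable
  show ?case unfolding e
    by (intro measurable_If m1 m2 m3 s1 s2)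
qed

lemma Gs_norm_meas:
  assumes "finite F"
  shows "(\<lambda>t. (norm (Gs T F x t))\<^sup>2) \<in> borel_measurable lborel"
proof -
  have "(\<lambda>t. norm (0 + (\<Sum>p\<in>F. haar (fst p) (snd p) t *\<^sub>R T (x p)))) \<in> borel_measurable lborel"
    by (rule norm_sum_meas[OF assms])
  then have "(\<lambda>t. norm (Gs T F x t)) \<in> borel_measurable lborel"
    unfolding Gs_def case_prod_unfold prod.collapse by simp
  then show ?thesis by measurable
qed

lemma Gs_int:
  assumes "finite F"
  shows "integrable lborel (\<lambda>t. (norm (Gs T F x t))\<^sup>2)"
proof -
  define B where "B = (\<Sum>p\<in>F. 2 powr ((real (fst p) - 1) / 2) * norm (T (x p)))"
  have nb: "norm (Gs T F x t) \<le> B" for t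
  proof -
    have "norm (Gs T F x t) \<le> (\<Sum>p\<in>F. norm (haar (fst p) (snd p) t *\<^sub>R T (x p)))"
      unfolding Gs_def case_prod_unfold prod.collapse by (rule norm_sum)
    also have "\<dots> \<le> B" unfolding B_def
      by (intro sum_mono) (simp add: mult_right_mono haar_bound)
    finally show ?thesis .
  qed
  have "integrable lborel (\<lambda>t. B\<^sup>2 * indicator {0..<1::real} t)"
    by (intro integrable_mult_right integrable_real_indicator) auto
  moreover have "(\<lambda>t. (norm (Gs T F x t))\<^sup>2) \<in> borel_measurable lborel"
    by (rule Gs_norm_meas[OF assms])
  moreover have "AE t in lborel. norm ((norm (Gs T F x t))\<^sup>2) \<le> norm (B\<^sup>2 * indicator {0..<1::real} t)"
    proof (rule AE_I2)
      fix t :: real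
      show "norm ((norm (Gs T F x t))\<^sup>2) \<le> norm (B\<^sup>2 * indicator {0..<1::real} t)"
      proof (cases "t \<in> {0..<1}")
        case True
        have "(norm (Gs T F x t))\<^sup>2 \<le> B\<^sup>2" using nb[of t] by (simp add: power_mono)
        then show ?thesis using True by simp
      next
        case False then show ?thesis by (simp add: Gs_zero)
      qed
    qed
  ultimately show ?thesis by (rule Bochner_Integration.integrable_bound)
qed

definition Is :: "('a \<Rightarrow> 'b::real_normed_vector) \<Rightarrow> (nat \<times> int) set \<Rightarrow> (nat \<times> int \<Rightarrow> 'a) \<Rightarrow> real" where
  "Is T F x = (LINT t|lborel. (norm (Gs T F x t))\<^sup>2)"

lemma Is_nonneg: "0 \<le> Is T F x"
  unfolding Is_def by (intro integral_nonneg_AE) simp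

lemma L2_Is: "L2_norm (Gs T F x) = sqrt (Is T F x)"
proof -
  have "(\<lambda>t. indicator {0..<1::real} t *\<^sub>R (norm (Gs T F x t))\<^sup>2) = (\<lambda>t. (norm (Gs T F x t))\<^sup>2)"
  proof
    fix t :: real show "indicator {0..<1::real} t *\<^sub>R (norm (Gs T F x t))\<^sup>2 = (norm (Gs T F x t))\<^sup>2"
      by (cases "t \<in> {0..<1}") (simp_all add: Gs_zero)
  qed
  then show ?thesis unfolding L2_norm_def Is_def set_lebesgue_integral_def by simp
qed

lemma Is_split:
  assumes "1 \<le> a"
  shows "Is T (dyadic_index (a+1) (b+1)) x = Is T (dyadic_index a b) (x \<circ> Lf) + Is T (dyadic_index a b) (x \<circ> Rf)"
proof -
  define D where "D = dyadic_index a b"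
  define hL where "hL = (\<lambda>s. (norm (Gs T D (x \<circ> Lf) s))\<^sup>2)"
  define hR where "hR = (\<lambda>s. (norm (Gs T D (x \<circ> Rf) s))\<^sup>2)"
  have iL: "integrable lborel hL" and iR: "integrable lborel hR"
    unfolding hL_def hR_def D_def by (simp_all add: Gs_int finite_dyadic_index)
  have pt: "(norm (Gs T (dyadic_index (a+1) (b+1)) x t))\<^sup>2 = 2 * hL (0 + 2*t) + 2 * hR (-1 + 2*t)" for t
  proof -
    have sc: "(norm (sqrt 2 *\<^sub>R v))\<^sup>2 = 2 * (norm v)\<^sup>2" for v :: 'b
      by (simp add: power_mult_distrib)
    have ns: "norm (Gs T D (x \<circ> Lf) (2*t) + Gs T D (x \<circ> Rf) (2*t - 1)) ^ 2
        = (norm (Gs T D (x \<circ> Lf) (2*t)))\<^sup>2 + (norm (Gs T D (x \<circ> Rf) (2*t - 1)))\<^sup>2"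
    proof (cases "2*t \<in> {0..<1}")
      case True
      then have "2*t - 1 \<notin> {0..<1}" by auto
      then show ?thesis by (simp add: Gs_zero)
    next
      case False then show ?thesis by (simp add: Gs_zero)
    qed
    show ?thesis
      unfolding Gs_split[OF assms] sc D_def[symmetric] ns hL_def hR_def by simp
  qed
  have aL: "integrable lborel (\<lambda>t. hL (0 + 2*t))" using iL lborel_integrable_real_affine_iff[of 2 hL 0] by simp
  have aR: "integrable lborel (\<lambda>t. hR (-1 + 2*t))" using iR lborel_integrable_real_affine_iff[of 2 hR "-1"] by simp
  have eL: "(\<integral>t. hL t \<partial>lborel) = 2 * (\<integral>t. hL (0 + 2*t) \<partial>lborel)"
    using lborel_integral_real_affine[of 2 hL 0] by simp
  have eR: "(\<integral>t. hR t \<partial>lborel) = 2 * (\<integral>t. hR (-1 + 2*t) \<partial>lborel)"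
    using lborel_integral_real_affine[of 2 hR "-1"] by simp
  have "Is T (dyadic_index (a+1) (b+1)) x = (\<integral>t. 2 * hL (0 + 2*t) + 2 * hR (-1 + 2*t) \<partial>lborel)"
    unfolding Is_def pt ..
  also have "\<dots> = 2 * (\<integral>t. hL (0 + 2*t) \<partial>lborel) + 2 * (\<integral>t. hR (-1 + 2*t) \<partial>lborel)"
    using aL aR by simp
  also have "\<dots> = Is T D (x \<circ> Lf) + Is T D (x \<circ> Rf)"
  proof -
    have "Is T D (x \<circ> Lf) = (\<integral>t. hL t \<partial>lborel)" unfolding Is_def hL_def ..
    moreover have "Is T D (x \<circ> Rf) = (\<integral>t. hR t \<partial>lborel)" unfolding Is_def hR_def ..
    ultimately show ?thesis using eL eR by simp
  qed
  finally show ?thesis unfolding D_def .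
qed

definition adm :: "('a::real_normed_vector \<Rightarrow> 'b::real_normed_vector) \<Rightarrow> (nat \<times> int) set \<Rightarrow> real \<Rightarrow> bool" where
  "adm T F c \<longleftrightarrow> 0 \<le> c \<and> (\<forall>x. Is T F x \<le> c\<^sup>2 * Ns F x)"

lemma Ns_nonneg: "0 \<le> Ns F x"
  unfolding Ns_def by (intro sum_nonneg) auto

lemma tau_adm: "tau T F = Inf {c. adm T F c}"
proof -
  have "(0 \<le> c \<and> (\<forall>x :: nat \<times> int \<Rightarrow> 'a.
      L2_norm (\<lambda>t. \<Sum>(k, j)\<in>F. haar k j t *\<^sub>R T (x (k, j)))
        \<le> c * sqrt (\<Sum>(k, j)\<in>F. (norm (x (k, j)))\<^sup>2))) = adm T F c" for c
  proof -
    have "L2_norm (\<lambda>t. \<Sum>(k, j)\<in>F. haar k j t *\<^sub>R T (x (k, j)))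
        \<le> c * sqrt (\<Sum>(k, j)\<in>F. (norm (x (k, j)))\<^sup>2) \<longleftrightarrow> Is T F x \<le> c\<^sup>2 * Ns F x"
      if "0 \<le> c" for x
    proof -
      have "c * sqrt (Ns F x) = sqrt (c\<^sup>2 * Ns F x)" using that by (simp add: real_sqrt_mult)
      then show ?thesis
        using L2_Is[of T F x] unfolding Gs_def[symmetric] Ns_def[symmetric] by simp
    qed
    then show ?thesis unfolding adm_def by auto
  qed
  then show ?thesis unfolding tau_def by simp
qed

lemma Gs_cong: "(\<And>p. p \<in> F \<Longrightarrow> x p = y p) \<Longrightarrow> Gs T F x = Gs T F y"
  unfolding Gs_def case_prod_unfold by (intro ext sum.cong) auto

lemma Ns_cong: "(\<And>p. p \<in> F \<Longrightarrow> x p = y p) \<Longrightarrow> Ns F x = Ns F y"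
  unfolding Ns_def case_prod_unfold by (intro sum.cong) auto

lemma adm_shift:
  fixes T :: "'a::real_normed_vector \<Rightarrow> 'b::real_normed_vector"
  assumes "1 \<le> a" "T 0 = 0"
  shows "adm T (dyadic_index (a+1) (b+1)) c = adm T (dyadic_index a b) c"
proof
  assume A: "adm T (dyadic_index (a+1) (b+1)) c"
  show "adm T (dyadic_index a b) c" unfolding adm_def
  proof (intro conjI allI)
    show "0 \<le> c" using A unfolding adm_def by simp
    fix y :: "nat \<times> int \<Rightarrow> 'a"
    define x where "x = (\<lambda>p::nat \<times> int. if snd p \<le> 2^(fst p - 2) then y (fst p - 1, snd p) else 0)"
    have xl: "(x \<circ> Lf) p = y p" if "p \<in> dyadic_index a b" for p
    proof -
      obtain k j where p: "p = (k,j)" by fastforce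
      have "1 \<le> k" "j \<le> 2^(k-1)" using that assms unfolding p dyadic_index_def by auto
      then show ?thesis unfolding p x_def Lf_def by simp
    qed
    have xr: "(x \<circ> Rf) p = 0" if "p \<in> dyadic_index a b" for p
    proof -
      obtain k j where p: "p = (k,j)" by fastforce
      have "1 \<le> j" using that assms unfolding p dyadic_index_def by auto
      then show ?thesis unfolding p x_def Rf_def by simp
    qed
    have "Gs T (dyadic_index a b) (x \<circ> Rf) = Gs T (dyadic_index a b) (\<lambda>_. 0)"
      using xr by (intro Gs_cong) simp
    also have "\<dots> = (\<lambda>_. 0)" unfolding Gs_def using assms(2) by simp
    finally have z1: "Is T (dyadic_index a b) (x \<circ> Rf) = 0" unfolding Is_def by simp
    have z2: "Ns (dyadic_index a b) (x \<circ> Rf) = 0" using xr Ns_cong[of _ "x \<circ> Rf" "\<lambda>_. 0"]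
      by (simp add: Ns_def)
    have g: "Gs T (dyadic_index a b) (x \<circ> Lf) = Gs T (dyadic_index a b) y" using xl by (intro Gs_cong) simp
    have n: "Ns (dyadic_index a b) (x \<circ> Lf) = Ns (dyadic_index a b) y" using xl by (intro Ns_cong) simp
    have "Is T (dyadic_index (a+1) (b+1)) x \<le> c\<^sup>2 * Ns (dyadic_index (a+1) (b+1)) x"
      using A unfolding adm_def by simp
    then show "Is T (dyadic_index a b) y \<le> c\<^sup>2 * Ns (dyadic_index a b) y"
      unfolding Is_split[OF assms(1)] Ns_split[OF assms(1)] z1 z2 using g n unfolding Is_def by simp
  qed
next
  assume A: "adm T (dyadic_index a b) c"
  show "adm T (dyadic_index (a+1) (b+1)) c" unfolding adm_def
  proof (intro conjI allI)
    show "0 \<le> c" using A unfolding adm_def by simp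
    fix x
    have "Is T (dyadic_index a b) (x \<circ> Lf) \<le> c\<^sup>2 * Ns (dyadic_index a b) (x \<circ> Lf)"
      "Is T (dyadic_index a b) (x \<circ> Rf) \<le> c\<^sup>2 * Ns (dyadic_index a b) (x \<circ> Rf)"
      using A unfolding adm_def by auto
    then show "Is T (dyadic_index (a+1) (b+1)) x \<le> c\<^sup>2 * Ns (dyadic_index (a+1) (b+1)) x"
      unfolding Is_split[OF assms(1)] Ns_split[OF assms(1)] by (simp add: distrib_left)
  qed
qed

theorem corollary3p12:
  fixes T :: "'a::banach \<Rightarrow> 'b::banach" and m n :: nat
  assumes "bounded_linear T"
  shows "tau T (dyadic_index (m + 1) (m + n)) = tau T (dyadic_index 1 n)"
proof -
  have T0: "T 0 = 0" using assms by (simp add: bounded_linear.linear linear_0)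
  have "adm T (dyadic_index (m + 1) (m + n)) c = adm T (dyadic_index 1 n) c" for c
  proof (induction m)
    case 0 then show ?case by simp
  next
    case (Suc m)
    have "dyadic_index (Suc m + 1) (Suc m + n) = dyadic_index ((m+1)+1) ((m+n)+1)" by simp
    then show ?case using adm_shift[of "m+1" T "m+n" c] T0 Suc.IH by simp
  qed
  then have "{c. adm T (dyadic_index (m + 1) (m + n)) c} = {c. adm T (dyadic_index 1 n) c}" by blast
  then show ?thesis unfolding tau_adm by simp
qed

end
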